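(* Let $d_1,d_2$ be positive even integers and $d = d_1+d_2-1$; let $n_1,n_2$ be positive integers with $n = n_1+n_2$ and $d_1 n_1 \ge d_2 n_2$. Let $A$ be the $(d+1)\times n_1$ matrix of a regular 3-design of size $n_1$ on $S^d$, written as $A = \begin{pmatrix} A_1 \\ A_2\end{pmatrix}$ with $A_1$ consisting of the first $d_1$ rows and $A_2$ of the last $d_2$ rows, and let $C$ be the $d_1 \times n_2$ matrix of a regular 3-design of size $n_2$ on $S^{d_1-1}$. Put $\alpha = \sqrt{1 - \frac{d_2 n_2}{d_1 n_1}}$ and $\beta = \sqrt{1+\frac{n_2}{n_1}}$. Then the $n$ column vectors of $M = \begin{pmatrix} \alpha A_1 & C \\ \beta A_2 & 0\end{pmatrix}$ form a spherical 3-design on $S^d$.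
   Context: For positive integers $N$ and $m$, $s(m) = \big(\sin(\tfrac{2\pi}{N}km)\big)_{k=1}^N$, $c(m) = \big(\cos(\tfrac{2\pi}{N}km)\big)_{k=1}^N$. A set $S$ of integers is a Sidon-type set of strength $t$ in $\mathbb{Z}_N$ if no non-trivial sum $\varepsilon_1x_1+\cdots+\varepsilon_tx_t$ ($\varepsilon_i\in\{0,\pm1\}$, $x_i\in S$ not necessarily distinct) is $\equiv 0 \bmod N$; non-trivial means some $\varepsilon_i\neq0$ and no element appears with both coefficients $+1$ and $-1$. For $D$ odd and $e=(D+1)/2$, the matrix of a regular $s$-design of size $N$ on $S^D$ is $\sqrt{2/(D+1)}\,A(S)$, where $S=\{m_1,\dots,m_e\}$ is a Sidon-type set of strength $s$ in $\mathbb{Z}_N$ and $A(S)$ is the $2e\times N$ matrix with rows $s(m_1),c(m_1),\dots,s(m_e),c(m_e)$. A collection of points of $S^D\subset\mathbb{R}^{D+1}$ (columns of a matrix, with multiplicity) is a spherical $t$-design if for every polynomial of degree at most $t$ its average over $S^D$ (surface measure) equals its arithmetic average over the points. *)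

theory Defs
  imports "HOL-Analysis.Analysis"
begin

text \<open>Points of R^m are represented as functions nat => real, only coordinates i < m matter.
  Matrices are functions nat => nat => real (row index, column index), indices from 0.\<close>

definition sq_norm :: "nat \<Rightarrow> (nat \<Rightarrow> real) \<Rightarrow> real" where
  "sq_norm m x = (\<Sum>i<m. (x i)\<^sup>2)"

definition exps :: "nat \<Rightarrow> nat \<Rightarrow> (nat \<Rightarrow> nat) set" where
  "exps m t = {a. (\<forall>i\<ge>m. a i = 0) \<and> (\<Sum>i<m. a i) \<le> t}"

definition poly_deg_le :: "nat \<Rightarrow> nat \<Rightarrow> ((nat \<Rightarrow> real) \<Rightarrow> real) \<Rightarrow> bool" where
  "poly_deg_le m t p \<longleftrightarrow>
     (\<exists>c :: (nat \<Rightarrow> nat) \<Rightarrow> real. \<forall>x. p x = (\<Sum>a\<in>exps m t. c a * (\<Prod>i<m. x i ^ a i)))"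

definition lebm :: "nat \<Rightarrow> (nat \<Rightarrow> real) measure" where
  "lebm m = PiM {..<m} (\<lambda>_. lborel)"

definition unit_ball :: "nat \<Rightarrow> (nat \<Rightarrow> real) set" where
  "unit_ball m = {x \<in> space (lebm m). sq_norm m x \<le> 1}"

definition normalize_pt :: "nat \<Rightarrow> (nat \<Rightarrow> real) \<Rightarrow> nat \<Rightarrow> real" where
  "normalize_pt m x = (\<lambda>i. if i < m then x i / sqrt (sq_norm m x) else 0)"

text \<open>The normalized surface measure on the sphere is the push-forward of normalized Lebesgue
  measure on the unit ball under x \<mapsto> x/|x| (cone measure = surface measure on the sphere).\<close>
definition sphere_avg :: "nat \<Rightarrow> ((nat \<Rightarrow> real) \<Rightarrow> real) \<Rightarrow> real" where
  "sphere_avg m f =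
     (LINT x : unit_ball m | lebm m. f (normalize_pt m x)) / measure (lebm m) (unit_ball m)"

definition col :: "nat \<Rightarrow> (nat \<Rightarrow> nat \<Rightarrow> real) \<Rightarrow> nat \<Rightarrow> nat \<Rightarrow> real" where
  "col m X j = (\<lambda>i. if i < m then X i j else 0)"

definition spherical_design :: "nat \<Rightarrow> nat \<Rightarrow> nat \<Rightarrow> (nat \<Rightarrow> nat \<Rightarrow> real) \<Rightarrow> bool" where
  "spherical_design m t N X \<longleftrightarrow>
     (\<forall>j<N. sq_norm m (col m X j) = 1) \<and>
     (\<forall>p. poly_deg_le m t p \<longrightarrow> sphere_avg m p = (\<Sum>j<N. p (col m X j)) / real N)"

definition sidon_type :: "nat \<Rightarrow> nat \<Rightarrow> int set \<Rightarrow> bool" where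
  "sidon_type N t S \<longleftrightarrow>
     (\<forall>(x :: nat \<Rightarrow> int) (\<epsilon> :: nat \<Rightarrow> int).
        (\<forall>i<t. x i \<in> S \<and> \<epsilon> i \<in> {-1, 0, 1}) \<and>
        (\<exists>i<t. \<epsilon> i \<noteq> 0) \<and>
        (\<forall>i<t. \<forall>j<t. x i = x j \<longrightarrow> \<not> (\<epsilon> i = 1 \<and> \<epsilon> j = -1))
        \<longrightarrow> (\<Sum>i<t. \<epsilon> i * x i) mod int N \<noteq> 0)"

text \<open>X is the (D+1) x N matrix of a regular s-design of size N on S^D (D odd):
  X = sqrt(2/(D+1)) A(S) with S = {m_1,...,m_e} a Sidon-type set of strength s, e = (D+1)/2,
  rows s(m_1), c(m_1), ..., s(m_e), c(m_e).  Row 2l / 2l+1 (0-based) is s(m_(l+1)) / c(m_(l+1)),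
  column j (0-based) corresponds to k = j+1.\<close>
definition regular_design_matrix :: "nat \<Rightarrow> nat \<Rightarrow> nat \<Rightarrow> (nat \<Rightarrow> nat \<Rightarrow> real) \<Rightarrow> bool" where
  "regular_design_matrix s D N X \<longleftrightarrow> odd D \<and> N > 0 \<and>
     (\<exists>mm :: nat \<Rightarrow> nat.
        (\<forall>l < (D+1) div 2. mm l > 0) \<and> inj_on mm {..<(D+1) div 2} \<and>
        sidon_type N s (int ` mm ` {..<(D+1) div 2}) \<and>
        (\<forall>i<D+1. \<forall>j<N. X i j = sqrt (2 / real (D+1)) *
            (if even i then sin (2 * pi / real N * real (j+1) * real (mm (i div 2)))
             else cos (2 * pi / real N * real (j+1) * real (mm (i div 2))))))"

end

theory Submission
  imports Defs
begin



lemma trig_sum_zero: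
  fixes N :: nat and r :: int and \<phi> :: real
  assumes N: "N > 0" and r: "r mod int N \<noteq> 0"
  shows "(\<Sum>j<N. sin (2*pi/real N * real (Suc j) * of_int r + \<phi>)) = 0"
proof -
  define w where "w = cis (2 * pi * of_int r / real N)"
  have w1: "w \<noteq> 1"
  proof
    assume "w = 1"
    then obtain k :: int where k: "2 * pi * of_int r / real N = 2 * pi * of_int k"
      by (auto simp: w_def complex_eq_iff cos_one_2pi_int)
    hence "of_int r = real N * of_int k" using N by (simp add: field_simps)
    hence "r = int N * k" by (metis of_int_eq_iff of_int_mult of_int_of_nat_eq)
    thus False using r by simp
  qed
  have wN: "w ^ N = 1"
  proof -
    have "w ^ N = cis (real N * (2 * pi * of_int r / real N))" unfolding w_def by (rule Complex.DeMoivre)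
    also have "real N * (2 * pi * of_int r / real N) = 2 * pi * of_int r" using N by simp
    also have "cis (2 * pi * of_int r) = 1" by (rule cis_multiple_2pi) simp
    finally show ?thesis .
  qed
  have "(\<Sum>j<N. cis (2*pi/real N * real (Suc j) * of_int r + \<phi>)) = (\<Sum>j<N. cis \<phi> * w * w ^ j)"
  proof (intro sum.cong refl)
    fix j assume "j \<in> {..<N}"
    have "cis \<phi> * w * w ^ j = cis \<phi> * w ^ Suc j" by simp
    also have "w ^ Suc j = cis (real (Suc j) * (2 * pi * of_int r / real N))"
      unfolding w_def by (rule Complex.DeMoivre)
    also have "cis \<phi> * \<dots> = cis (\<phi> + real (Suc j) * (2 * pi * of_int r / real N))"
      by (simp add: cis_mult)
    also have "\<phi> + real (Suc j) * (2 * pi * of_int r / real N) = 2*pi/real N * real (Suc j) * of_int r + \<phi>"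
      by (simp add: field_simps)
    finally show "cis (2*pi/real N * real (Suc j) * of_int r + \<phi>) = cis \<phi> * w * w ^ j" by simp
  qed
  also have "\<dots> = cis \<phi> * w * (\<Sum>j<N. w ^ j)" by (simp add: sum_distrib_left)
  also have "(\<Sum>j<N. w ^ j) = 0" using w1 wN by (simp add: sum_gp_strict)
  finally have "(\<Sum>j<N. cis (2*pi/real N * real (Suc j) * of_int r + \<phi>)) = 0" by simp
  hence "Im (\<Sum>j<N. cis (2*pi/real N * real (Suc j) * of_int r + \<phi>)) = 0" by simp
  thus ?thesis by (simp add: Im_sum)
qed




definition th :: "nat \<Rightarrow> nat \<Rightarrow> real" where "th N j = 2*pi/real N * real (Suc j)"

lemma K': "N > 0 \<Longrightarrow> r mod int N \<noteq> 0 \<Longrightarrow> (\<Sum>j<N. sin (th N j * of_int r + \<phi>)) = 0"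
  unfolding th_def by (rule trig_sum_zero)

lemma prod2: "sin (X::real) * sin Y = (sin ((X - Y) + pi/2) - sin ((X + Y) + pi/2)) / 2"
  by (simp add: sin_add cos_add cos_diff sin_diff algebra_simps)

lemma prod3: "sin (X::real) * sin Y * sin Z =
   (sin (X + Y - Z) + sin (Y + Z - X) + sin (Z + X - Y) - sin (X + Y + Z)) / 4"
  by (simp add: sin_add cos_add cos_diff sin_diff algebra_simps power2_eq_square)




lemma sum2: fixes t :: "nat \<Rightarrow> real" shows "(\<Sum>j<N. sin (t j * of_int a + \<phi>1) * sin (t j * of_int b + \<phi>2)) =
   ((\<Sum>j<N. sin (t j * of_int (a - b) + (\<phi>1 - \<phi>2 + pi/2))) -
    (\<Sum>j<N. sin (t j * of_int (a + b) + (\<phi>1 + \<phi>2 + pi/2)))) / 2"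
proof -
  have "(\<Sum>j<N. sin (t j * of_int a + \<phi>1) * sin (t j * of_int b + \<phi>2)) =
     (\<Sum>j<N. (sin (t j * of_int (a - b) + (\<phi>1 - \<phi>2 + pi/2)) -
        sin (t j * of_int (a + b) + (\<phi>1 + \<phi>2 + pi/2))) / 2)"
  proof (intro sum.cong refl)
    fix j
    have e1: "t j * of_int (a - b) + (\<phi>1 - \<phi>2 + pi/2) = (t j * of_int a + \<phi>1) - (t j * of_int b + \<phi>2) + pi/2"
      by (simp add: algebra_simps)
    have e2: "t j * of_int (a + b) + (\<phi>1 + \<phi>2 + pi/2) = (t j * of_int a + \<phi>1) + (t j * of_int b + \<phi>2) + pi/2"
      by (simp add: algebra_simps)
    show "sin (t j * of_int a + \<phi>1) * sin (t j * of_int b + \<phi>2) = (sin (t j * of_int (a - b) + (\<phi>1 - \<phi>2 + pi/2)) -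
        sin (t j * of_int (a + b) + (\<phi>1 + \<phi>2 + pi/2))) / 2"
      unfolding e1 e2 by (rule prod2)
  qed
  thus ?thesis by (simp only: sum_divide_distrib[symmetric] sum_subtractf)
qed

lemma sum3: fixes t :: "nat \<Rightarrow> real" shows "(\<Sum>j<N. sin (t j * of_int a + \<phi>1) * sin (t j * of_int b + \<phi>2) * sin (t j * of_int c + \<phi>3)) =
   ((\<Sum>j<N. sin (t j * of_int (a + b - c) + (\<phi>1 + \<phi>2 - \<phi>3))) +
    (\<Sum>j<N. sin (t j * of_int (b + c - a) + (\<phi>2 + \<phi>3 - \<phi>1))) +
    (\<Sum>j<N. sin (t j * of_int (c + a - b) + (\<phi>3 + \<phi>1 - \<phi>2))) -
    (\<Sum>j<N. sin (t j * of_int (a + b + c) + (\<phi>1 + \<phi>2 + \<phi>3)))) / 4"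
proof -
  have "(\<Sum>j<N. sin (t j * of_int a + \<phi>1) * sin (t j * of_int b + \<phi>2) * sin (t j * of_int c + \<phi>3)) =
     (\<Sum>j<N. (sin (t j * of_int (a + b - c) + (\<phi>1 + \<phi>2 - \<phi>3)) +
      sin (t j * of_int (b + c - a) + (\<phi>2 + \<phi>3 - \<phi>1)) +
      sin (t j * of_int (c + a - b) + (\<phi>3 + \<phi>1 - \<phi>2)) -
      sin (t j * of_int (a + b + c) + (\<phi>1 + \<phi>2 + \<phi>3))) / 4)"
  proof (intro sum.cong refl)
    fix j
    let ?X = "t j * of_int a + \<phi>1" and ?Y = "t j * of_int b + \<phi>2" and ?Z = "t j * of_int c + \<phi>3"
    have e1: "t j * of_int (a + b - c) + (\<phi>1 + \<phi>2 - \<phi>3) = ?X + ?Y - ?Z"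
      by (simp add: algebra_simps)
    have e2: "t j * of_int (b + c - a) + (\<phi>2 + \<phi>3 - \<phi>1) = ?Y + ?Z - ?X"
      by (simp add: algebra_simps)
    have e3: "t j * of_int (c + a - b) + (\<phi>3 + \<phi>1 - \<phi>2) = ?Z + ?X - ?Y"
      by (simp add: algebra_simps)
    have e4: "t j * of_int (a + b + c) + (\<phi>1 + \<phi>2 + \<phi>3) = ?X + ?Y + ?Z"
      by (simp add: algebra_simps)
    show "sin ?X * sin ?Y * sin ?Z = (sin (t j * of_int (a + b - c) + (\<phi>1 + \<phi>2 - \<phi>3)) +
      sin (t j * of_int (b + c - a) + (\<phi>2 + \<phi>3 - \<phi>1)) +
      sin (t j * of_int (c + a - b) + (\<phi>3 + \<phi>1 - \<phi>2)) -
      sin (t j * of_int (a + b + c) + (\<phi>1 + \<phi>2 + \<phi>3))) / 4"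
      unfolding e1 e2 e3 e4 by (rule prod3)
  qed
  thus ?thesis by (simp only: sum_divide_distrib[symmetric] sum_subtractf sum.distrib)
qed




lemma all3: "(\<forall>i<(3::nat). P i) = (P 0 \<and> P 1 \<and> P 2)"
  unfolding numeral_3_eq_3 numeral_2_eq_2 by (auto simp: less_Suc_eq)
lemma ex3: "(\<exists>i<(3::nat). P i) = (P 0 \<or> P 1 \<or> P 2)"
  unfolding numeral_3_eq_3 numeral_2_eq_2 by (auto simp: less_Suc_eq)
lemma sum3n: "(\<Sum>i<(3::nat). f i) = f 0 + f 1 + (f 2 :: 'a::comm_monoid_add)"
  unfolding numeral_3_eq_3 numeral_2_eq_2 by (simp add: add_ac)

lemma sidon_inst:
  assumes sid: "sidon_type N 3 S" and "x0 \<in> S" "x1 \<in> S" "x2 \<in> S"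
    and "e0 \<in> {-1,0,1}" "e1 \<in> {-1,0,1}" "e2 \<in> {-1,0,1}" "e0 \<noteq> 0 \<or> e1 \<noteq> 0 \<or> e2 \<noteq> 0"
    and "x0 = x1 \<longrightarrow> \<not>(e0 = 1 \<and> e1 = -1) \<and> \<not>(e0 = -1 \<and> e1 = 1)"
        "x0 = x2 \<longrightarrow> \<not>(e0 = 1 \<and> e2 = -1) \<and> \<not>(e0 = -1 \<and> e2 = 1)"
        "x1 = x2 \<longrightarrow> \<not>(e1 = 1 \<and> e2 = -1) \<and> \<not>(e1 = -1 \<and> e2 = 1)"
  shows "(e0 * x0 + e1 * x1 + e2 * x2) mod int N \<noteq> 0"
proof -
  define x where "x = (\<lambda>i::nat. if i = 0 then x0 else if i = 1 then x1 else x2)"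
  define e where "e = (\<lambda>i::nat. if i = 0 then e0 else if i = 1 then e1 else e2)"
  have hx: "x 0 = x0" "x 1 = x1" "x 2 = x2" by (simp_all add: x_def)
  have he: "e 0 = e0" "e 1 = e1" "e 2 = e2" by (simp_all add: e_def)
  have "(\<forall>i<3. x i \<in> S \<and> e i \<in> {-1, 0, 1}) \<and> (\<exists>i<3. e i \<noteq> 0) \<and>
        (\<forall>i<3. \<forall>j<3. x i = x j \<longrightarrow> \<not> (e i = 1 \<and> e j = -1))"
    using assms(2-) unfolding all3 ex3 hx he by auto
  hence "(\<Sum>i<3. e i * x i) mod int N \<noteq> 0" using sid unfolding sidon_type_def by (elim allE[of _ x] allE[of _ e]) (rule mp)
  thus ?thesis unfolding sum3n hx he by simp
qed

lemma sidon1: "sidon_type N 3 S \<Longrightarrow> x \<in> S \<Longrightarrow> x mod int N \<noteq> 0"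
  using sidon_inst[of N S x x x 1 0 0] by simp

lemma sidon_pm: "sidon_type N 3 S \<Longrightarrow> x \<in> S \<Longrightarrow> y \<in> S \<Longrightarrow> (x + y) mod int N \<noteq> 0"
  using sidon_inst[of N S x y y 1 1 0] by simp

lemma sidon_mm: "sidon_type N 3 S \<Longrightarrow> x \<in> S \<Longrightarrow> y \<in> S \<Longrightarrow> x \<noteq> y \<Longrightarrow> (x - y) mod int N \<noteq> 0"
  using sidon_inst[of N S x y y 1 "-1" 0] by simp

lemma sidon_ppp: "sidon_type N 3 S \<Longrightarrow> x \<in> S \<Longrightarrow> y \<in> S \<Longrightarrow> z \<in> S \<Longrightarrow> (x + y + z) mod int N \<noteq> 0"
  using sidon_inst[of N S x y z 1 1 1] by simp

lemma sidon_ppm: "sidon_type N 3 S \<Longrightarrow> x \<in> S \<Longrightarrow> y \<in> S \<Longrightarrow> z \<in> S \<Longrightarrow> (x + y - z) mod int N \<noteq> 0"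
proof -
  assume a: "sidon_type N 3 S" "x \<in> S" "y \<in> S" "z \<in> S"
  show ?thesis
  proof (cases "x = z")
    case True thus ?thesis using sidon1[OF a(1,3)] by simp
  next
    case False
    show ?thesis
    proof (cases "y = z")
      case True thus ?thesis using sidon1[OF a(1,2)] by simp
    next
      case False2: False
      show ?thesis using sidon_inst[of N S x y z 1 1 "-1"] a False False2 by simp
    qed
  qed
qed



definition ph :: "nat \<Rightarrow> real" where "ph i = (if even i then 0 else pi/2)"

lemma rdm_unpack:
  assumes "regular_design_matrix 3 D N X"
  obtains mm where "N > 0" "odd D" "inj_on mm {..<(D+1) div 2}"
    "sidon_type N 3 (int ` mm ` {..<(D+1) div 2})"
    "\<And>i j. i < D+1 \<Longrightarrow> j < N \<Longrightarrow>
       X i j = sqrt (2 / real (D+1)) * sin (th N j * of_int (int (mm (i div 2))) + ph i)"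
proof -
  from assms obtain mm where h: "odd D" "N > 0" "inj_on mm {..<(D+1) div 2}"
    "sidon_type N 3 (int ` mm ` {..<(D+1) div 2})"
    "\<forall>i<D+1. \<forall>j<N. X i j = sqrt (2 / real (D+1)) *
            (if even i then sin (2 * pi / real N * real (j+1) * real (mm (i div 2)))
             else cos (2 * pi / real N * real (j+1) * real (mm (i div 2))))"
    unfolding regular_design_matrix_def by blast
  have "X i j = sqrt (2 / real (D+1)) * sin (th N j * of_int (int (mm (i div 2))) + ph i)"
    if "i < D+1" "j < N" for i j
  proof -
    have e: "th N j * of_int (int (mm (i div 2))) = 2 * pi / real N * real (j+1) * real (mm (i div 2))"
      by (simp add: th_def)
    show ?thesis using h(5) that unfolding e ph_def by (simp add: sin_add)
  qed
  thus ?thesis using h that by blast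
qed

lemma div2_lt: "odd (D::nat) \<Longrightarrow> p < D + 1 \<Longrightarrow> p div 2 < (D+1) div 2"
  by presburger

lemma RD1:
  assumes "regular_design_matrix 3 D N X" "p < D+1"
  shows "(\<Sum>j<N. X p j) = 0"
proof -
  obtain mm where h: "N > 0" "odd D" "inj_on mm {..<(D+1) div 2}"
    "sidon_type N 3 (int ` mm ` {..<(D+1) div 2})"
    "\<And>i j. i < D+1 \<Longrightarrow> j < N \<Longrightarrow>
       X i j = sqrt (2 / real (D+1)) * sin (th N j * of_int (int (mm (i div 2))) + ph i)"
    using rdm_unpack[OF assms(1)] by blast
  have "(\<Sum>j<N. X p j) = sqrt (2 / real (D+1)) * (\<Sum>j<N. sin (th N j * of_int (int (mm (p div 2))) + ph p))"
    using h(5) assms(2) by (simp add: sum_distrib_left)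
  also have "(\<Sum>j<N. sin (th N j * of_int (int (mm (p div 2))) + ph p)) = 0"
    using h(1) sidon1[OF h(4)] div2_lt[OF h(2) assms(2)] by (intro K') auto
  finally show ?thesis by simp
qed

lemma RD2:
  assumes "regular_design_matrix 3 D N X" "p < D+1" "q < D+1"
  shows "(\<Sum>j<N. X p j * X q j) = (if p = q then real N / real (D+1) else 0)"
proof -
  obtain mm where h: "N > 0" "odd D" "inj_on mm {..<(D+1) div 2}"
    "sidon_type N 3 (int ` mm ` {..<(D+1) div 2})"
    "\<And>i j. i < D+1 \<Longrightarrow> j < N \<Longrightarrow>
       X i j = sqrt (2 / real (D+1)) * sin (th N j * of_int (int (mm (i div 2))) + ph i)"
    using rdm_unpack[OF assms(1)] by blast
  define k where "k = sqrt (2 / real (D+1))"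
  have h5: "\<And>i j. i < D+1 \<Longrightarrow> j < N \<Longrightarrow>
       X i j = k * sin (th N j * of_int (int (mm (i div 2))) + ph i)" using h(5) k_def by blast
  define a where "a = int (mm (p div 2))"
  define b where "b = int (mm (q div 2))"
  define S where "S = int ` mm ` {..<(D+1) div 2}"
  have aS: "a \<in> S" and bS: "b \<in> S"
    using div2_lt[OF h(2) assms(2)] div2_lt[OF h(2) assms(3)] by (auto simp: a_def b_def S_def)
  have k2: "k * k = 2 / real (D+1)" by (simp add: k_def)
  have "(\<Sum>j<N. X p j * X q j) = (k * k) *
      (\<Sum>j<N. sin (th N j * of_int a + ph p) * sin (th N j * of_int b + ph q))"
    unfolding sum_distrib_left
    by (intro sum.cong refl) (simp add: h5[OF assms(2)] h5[OF assms(3)] a_def b_def mult_ac)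
  also have "(\<Sum>j<N. sin (th N j * of_int a + ph p) * sin (th N j * of_int b + ph q)) =
     ((\<Sum>j<N. sin (th N j * of_int (a - b) + (ph p - ph q + pi/2))) -
      (\<Sum>j<N. sin (th N j * of_int (a + b) + (ph p + ph q + pi/2)))) / 2"
    by (rule sum2)
  also have "(\<Sum>j<N. sin (th N j * of_int (a + b) + (ph p + ph q + pi/2))) = 0"
    using h(1) sidon_pm[OF h(4)] aS bS unfolding S_def by (intro K') auto
  also have "(\<Sum>j<N. sin (th N j * of_int (a - b) + (ph p - ph q + pi/2))) =
     (if p = q then real N else 0)"
  proof (cases "p div 2 = q div 2")
    case True
    hence "a = b" by (simp add: a_def b_def)
    hence "(\<Sum>j<N. sin (th N j * of_int (a - b) + (ph p - ph q + pi/2))) = real N * sin (ph p - ph q + pi/2)"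
      by simp
    also have "sin (ph p - ph q + pi/2) = (if p = q then 1 else 0)"
    proof (cases "p = q")
      case False
      with True have "(even p \<and> odd q) \<or> (odd p \<and> even q)" by presburger
      thus ?thesis using False by (auto simp: ph_def)
    qed simp
    finally show ?thesis by simp
  next
    case False
    hence "p \<noteq> q" by auto
    have "mm (p div 2) \<noteq> mm (q div 2)"
      using False h(3) div2_lt[OF h(2) assms(2)] div2_lt[OF h(2) assms(3)]
      by (auto dest: inj_onD)
    hence "a \<noteq> b" by (simp add: a_def b_def)
    hence "(\<Sum>j<N. sin (th N j * of_int (a - b) + (ph p - ph q + pi/2))) = 0"
      using h(1) sidon_mm[OF h(4)] aS bS unfolding S_def by (intro K') auto
    thus ?thesis using \<open>p \<noteq> q\<close> by simp
  qed
  finally have E: "(\<Sum>j<N. X p j * X q j) = k * k * (((if p = q then real N else 0) - 0) / 2)" .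
  have aux: "2 * real N / (2 + real D * 2) = real N / (1 + real D)"
  proof -
    have "2 + real D * 2 = 2 * (1 + real D)" by simp
    hence "2 * real N / (2 + real D * 2) = (2 * real N) / (2 * (1 + real D))" by simp
    also have "\<dots> = real N / (1 + real D)" by (rule mult_divide_mult_cancel_left) simp
    finally show ?thesis .
  qed
  show ?thesis unfolding E k2 by (cases "p = q") (simp_all add: aux)
qed

lemma RD3:
  assumes "regular_design_matrix 3 D N X" "p < D+1" "q < D+1" "r < D+1"
  shows "(\<Sum>j<N. X p j * X q j * X r j) = 0"
proof -
  obtain mm where h: "N > 0" "odd D" "inj_on mm {..<(D+1) div 2}"
    "sidon_type N 3 (int ` mm ` {..<(D+1) div 2})"
    "\<And>i j. i < D+1 \<Longrightarrow> j < N \<Longrightarrow>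
       X i j = sqrt (2 / real (D+1)) * sin (th N j * of_int (int (mm (i div 2))) + ph i)"
    using rdm_unpack[OF assms(1)] by blast
  define k where "k = sqrt (2 / real (D+1))"
  have h5: "\<And>i j. i < D+1 \<Longrightarrow> j < N \<Longrightarrow>
       X i j = k * sin (th N j * of_int (int (mm (i div 2))) + ph i)" using h(5) k_def by blast
  define a where "a = int (mm (p div 2))"
  define b where "b = int (mm (q div 2))"
  define c where "c = int (mm (r div 2))"
  define S where "S = int ` mm ` {..<(D+1) div 2}"
  have aS: "a \<in> S" and bS: "b \<in> S" and cS: "c \<in> S"
    using div2_lt[OF h(2) assms(2)] div2_lt[OF h(2) assms(3)] div2_lt[OF h(2) assms(4)]
    by (auto simp: a_def b_def c_def S_def)
  have "(\<Sum>j<N. X p j * X q j * X r j) = (k ^ 3) *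
      (\<Sum>j<N. sin (th N j * of_int a + ph p) * sin (th N j * of_int b + ph q) * sin (th N j * of_int c + ph r))"
    unfolding sum_distrib_left
    by (intro sum.cong refl) (simp add: h5[OF assms(2)] h5[OF assms(3)] h5[OF assms(4)] a_def b_def c_def mult_ac power3_eq_cube)
  also have "(\<Sum>j<N. sin (th N j * of_int a + ph p) * sin (th N j * of_int b + ph q) * sin (th N j * of_int c + ph r)) = 0"
    unfolding sum3
    using K'[OF h(1) sidon_ppm[OF h(4)], of a b c] K'[OF h(1) sidon_ppm[OF h(4)], of b c a]
      K'[OF h(1) sidon_ppm[OF h(4)], of c a b] K'[OF h(1) sidon_ppp[OF h(4)], of a b c]
      aS bS cS unfolding S_def by simp
  finally show ?thesis by simp
qed


lemma RDnorm:
  assumes "regular_design_matrix 3 D N X" "j < N"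
  shows "2 * k \<le> D + 1 \<Longrightarrow> (\<Sum>i<2*k. (X i j)\<^sup>2) = 2 * real k / real (D+1)"
proof (induction k)
  case 0 thus ?case by simp
next
  case (Suc k)
  obtain mm where h: "N > 0" "odd D"
    "\<And>i j. i < D+1 \<Longrightarrow> j < N \<Longrightarrow>
       X i j = sqrt (2 / real (D+1)) * sin (th N j * of_int (int (mm (i div 2))) + ph i)"
    using rdm_unpack[OF assms(1)] by metis
  define t where "t = th N j * of_int (int (mm k))"
  have x1: "X (2*k) j = sqrt (2 / real (D+1)) * sin t"
    using h(3)[of "2*k" j] Suc.prems assms(2) by (simp add: t_def ph_def)
  have x2: "X (Suc (2*k)) j = sqrt (2 / real (D+1)) * cos t"
    using h(3)[of "Suc (2*k)" j] Suc.prems assms(2) by (simp add: t_def ph_def sin_add)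
  have "(\<Sum>i<2*Suc k. (X i j)\<^sup>2) = (\<Sum>i<2*k. (X i j)\<^sup>2) + ((X (2*k) j)\<^sup>2 + (X (Suc (2*k)) j)\<^sup>2)"
    by simp
  also have "(X (2*k) j)\<^sup>2 + (X (Suc (2*k)) j)\<^sup>2 = 2 / real (D+1) * ((sin t)\<^sup>2 + (cos t)\<^sup>2)"
    unfolding x1 x2 power_mult_distrib by (simp add: distrib_left del: sin_cos_squared_add sin_cos_squared_add2 sin_cos_squared_add3)
  also have "(sin t)\<^sup>2 + (cos t)\<^sup>2 = 1" by simp
  finally show ?case using Suc by (simp add: field_simps)
qed


definition monl :: "nat list \<Rightarrow> (nat \<Rightarrow> real) \<Rightarrow> real" where
  "monl qs y = prod_list (map y qs)"

lemma space_lebm: "space (lebm m) = PiE {..<m} (\<lambda>_. UNIV)"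
  by (simp add: lebm_def space_PiM)

lemma sets_lebm: "sets (lebm m) = sets (PiM {..<m} (\<lambda>_. lborel))"
  by (simp add: lebm_def)

lemma comp_meas[measurable]: "i < m \<Longrightarrow> (\<lambda>x. x i) \<in> borel_measurable (lebm m)"
  unfolding lebm_def by measurable

lemma sq_norm_meas[measurable]: "sq_norm m \<in> borel_measurable (lebm m)"
proof -
  have "(\<lambda>x. \<Sum>i<m. (x i)\<^sup>2) \<in> borel_measurable (lebm m)"
    by (intro borel_measurable_sum borel_measurable_power) (auto intro: comp_meas)
  thus ?thesis unfolding sq_norm_def[abs_def] .
qed

lemma ball_sets[measurable]: "unit_ball m \<in> sets (lebm m)"
proof -
  have "{x \<in> space (lebm m). sq_norm m x \<le> 1} \<in> sets (lebm m)" by measurable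
  thus ?thesis unfolding unit_ball_def .
qed

lemma norm_coord_meas: "i < m \<Longrightarrow> (\<lambda>x. normalize_pt m x i) \<in> borel_measurable (lebm m)"
proof -
  assume i: "i < m"
  have "(\<lambda>x. x i / sqrt (sq_norm m x)) \<in> borel_measurable (lebm m)"
    using i by (intro borel_measurable_divide borel_measurable_continuous_on[OF continuous_on_real_sqrt] comp_meas sq_norm_meas continuous_on_id)
  thus ?thesis using i unfolding normalize_pt_def by simp
qed

lemma mono_meas: "set qs \<subseteq> {..<m} \<Longrightarrow> (\<lambda>x. monl qs (normalize_pt m x)) \<in> borel_measurable (lebm m)"
proof (induction qs)
  case Nil thus ?case by (simp add: monl_def)
next
  case (Cons q qs)
  have "(\<lambda>x. normalize_pt m x q * monl qs (normalize_pt m x)) \<in> borel_measurable (lebm m)"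
    using Cons norm_coord_meas[of q m] by (intro borel_measurable_times) auto
  thus ?case by (simp add: monl_def)
qed

lemma coord_le_sq_norm: "i < m \<Longrightarrow> (x i)\<^sup>2 \<le> sq_norm m x"
  unfolding sq_norm_def by (rule member_le_sum) auto

lemma sq_norm_nonneg: "sq_norm m x \<ge> 0"
  unfolding sq_norm_def by (simp add: sum_nonneg)

lemma normalize_bound: "\<bar>normalize_pt m x i\<bar> \<le> 1"
proof (cases "i < m \<and> sq_norm m x > 0")
  case True
  have le: "\<bar>x i\<bar> \<le> sqrt (sq_norm m x)"
    using real_sqrt_le_mono[OF coord_le_sq_norm[of i m x]] True by simp
  have pos: "sqrt (sq_norm m x) > 0" using True by simp
  have "normalize_pt m x i = x i / sqrt (sq_norm m x)" using True by (simp add: normalize_pt_def)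
  hence "\<bar>normalize_pt m x i\<bar> = \<bar>x i\<bar> / sqrt (sq_norm m x)" using pos by (simp add: abs_divide)
  also have "\<dots> \<le> 1" using le pos by (simp add: divide_le_eq)
  finally show ?thesis .
next
  case False
  hence "normalize_pt m x i = 0"
  proof (cases "i < m")
    case True
    with False have "sq_norm m x = 0" using sq_norm_nonneg[of m x] by linarith
    thus ?thesis by (simp add: normalize_pt_def)
  qed (simp add: normalize_pt_def)
  thus ?thesis by simp
qed

lemma mono_bound: "\<bar>monl qs (normalize_pt m x)\<bar> \<le> 1"
proof (induction qs)
  case Nil thus ?case by (simp add: monl_def)
next
  case (Cons q qs)
  have "\<bar>normalize_pt m x q * monl qs (normalize_pt m x)\<bar> \<le> 1 * 1"
    unfolding abs_mult using Cons normalize_bound by (intro mult_mono) auto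
  thus ?case by (simp add: monl_def)
qed

interpretation lb: product_sigma_finite "(\<lambda>_. lborel) :: nat \<Rightarrow> real measure" by standard

lemma ball_finite: "emeasure (lebm m) (unit_ball m) < \<infinity>"
proof -
  have "unit_ball m \<subseteq> PiE {..<m} (\<lambda>_. {-1..1})"
  proof
    fix x assume x: "x \<in> unit_ball m"
    have "x i \<in> {-1..1}" if "i < m" for i
    proof -
      have "(x i)\<^sup>2 \<le> 1" using coord_le_sq_norm[OF that, of x] x by (auto simp: unit_ball_def)
      hence "\<bar>x i\<bar> \<le> 1" by (simp add: abs_square_le_1)
      thus ?thesis by (simp add: abs_le_iff)
    qed
    thus "x \<in> PiE {..<m} (\<lambda>_. {-1..1})" using x by (auto simp: unit_ball_def space_lebm PiE_iff)
  qed
  hence "emeasure (lebm m) (unit_ball m) \<le> emeasure (lebm m) (PiE {..<m} (\<lambda>_. {-1..1}))"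
    by (intro emeasure_mono) (auto simp: lebm_def)
  also have "\<dots> = (\<Prod>i<m. emeasure lborel {-1..(1::real)})"
    unfolding lebm_def by (rule lb.emeasure_PiM) auto
  also have "\<dots> = ennreal 2 ^ m" by simp
  also have "\<dots> < \<infinity>" by (simp add: power_less_top_ennreal)
  finally show ?thesis .
qed


definition J :: "nat \<Rightarrow> nat list \<Rightarrow> real" where
  "J m qs = set_lebesgue_integral (lebm m) (unit_ball m) (\<lambda>x. monl qs (normalize_pt m x))"

lemma J_inv:
  assumes Tm: "T \<in> measurable (lebm m) (lebm m)" and Td: "distr (lebm m) (lebm m) T = lebm m"
    and Tb: "\<And>x. x \<in> space (lebm m) \<Longrightarrow> (T x \<in> unit_ball m) = (x \<in> unit_ball m)"
    and Tf: "\<And>x. x \<in> space (lebm m) \<Longrightarrow> monl qs (normalize_pt m (T x)) = c * monl qs' (normalize_pt m x)"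
    and q: "set qs \<subseteq> {..<m}"
  shows "J m qs = c * J m qs'"
proof -
  define g where "g = (\<lambda>x. indicator (unit_ball m) x *\<^sub>R monl qs (normalize_pt m x))"
  have gm: "g \<in> borel_measurable (lebm m)"
    unfolding g_def using mono_meas[OF q] ball_sets[of m]
    by (intro borel_measurable_scaleR borel_measurable_indicator) auto
  have "J m qs = integral\<^sup>L (lebm m) g" by (simp add: J_def g_def set_lebesgue_integral_def)
  also have "\<dots> = integral\<^sup>L (distr (lebm m) (lebm m) T) g" by (simp add: Td)
  also have "\<dots> = integral\<^sup>L (lebm m) (\<lambda>x. g (T x))" by (rule integral_distr[OF Tm gm])
  also have "\<dots> = integral\<^sup>L (lebm m) (\<lambda>x. c * (indicator (unit_ball m) x *\<^sub>R monl qs' (normalize_pt m x)))"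
    using Tb Tf by (intro Bochner_Integration.integral_cong) (auto simp: g_def indicator_def)
  also have "\<dots> = c * J m qs'" by (simp add: J_def set_lebesgue_integral_def)
  finally show ?thesis .
qed


definition flip :: "nat \<Rightarrow> (nat \<Rightarrow> real) \<Rightarrow> nat \<Rightarrow> real" where
  "flip k x = x(k := - x k)"

lemma flip_meas: "k < m \<Longrightarrow> flip k \<in> measurable (lebm m) (lebm m)"
proof -
  assume k: "k < m"
  have "(\<lambda>x i. if i = k then - x k else x i) \<in> measurable (PiM {..<m} (\<lambda>_. lborel)) (PiM {..<m} (\<lambda>_. lborel :: real measure))"
  proof (rule measurable_PiM_single')
    fix i assume i: "i \<in> {..<m}"
    show "(\<lambda>x. if i = k then - x k else x i) \<in> measurable (PiM {..<m} (\<lambda>_. lborel)) lborel"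
      using i k by (cases "i = k") auto
  qed (use k in \<open>auto simp: space_PiM PiE_iff extensional_def\<close>)
  thus ?thesis unfolding lebm_def flip_def fun_upd_def by simp
qed

lemma lborel_uminus: "A \<in> sets lborel \<Longrightarrow> emeasure lborel (uminus -` A) = emeasure lborel (A :: real set)"
proof -
  assume A: "A \<in> sets lborel"
  have "emeasure lborel A = emeasure (distr lborel borel uminus) A" by (simp add: lborel_distr_uminus)
  also have "\<dots> = emeasure lborel (uminus -` A \<inter> space lborel)"
    using A by (intro emeasure_distr) auto
  finally show ?thesis by simp
qed

lemma flip_distr: "k < m \<Longrightarrow> distr (lebm m) (lebm m) (flip k) = lebm m"
proof -
  assume k: "k < m"
  show ?thesis unfolding lebm_def
  proof (rule lb.PiM_eqI)
    fix A :: "nat \<Rightarrow> real set" assume A: "\<And>i. i \<in> {..<m} \<Longrightarrow> A i \<in> sets lborel"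
    define A' where "A' = A(k := uminus -` A k)"
    have um: "uminus -` B \<in> sets borel" if "B \<in> sets borel" for B :: "real set"
      using measurable_sets[OF borel_measurable_uminus[OF measurable_ident_sets[OF refl]] that] by simp
    have A'm: "A' i \<in> sets lborel" if "i \<in> {..<m}" for i
      using A that k by (auto simp: A'_def intro!: um)
    have pre: "flip k -` PiE {..<m} A \<inter> space (PiM {..<m} (\<lambda>_. lborel)) = PiE {..<m} A'"
    proof (intro set_eqI iffI)
      fix x assume "x \<in> flip k -` PiE {..<m} A \<inter> space (PiM {..<m} (\<lambda>_. lborel))"
      hence x1: "\<forall>i\<in>{..<m}. flip k x i \<in> A i" and x2: "x \<in> extensional {..<m}"
        by (auto simp: space_PiM PiE_iff)
      have "\<forall>i\<in>{..<m}. x i \<in> A' i"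
      proof
        fix i assume i: "i \<in> {..<m}"
        show "x i \<in> A' i" using x1[rule_format, OF i] by (cases "i = k") (simp_all add: flip_def A'_def)
      qed
      thus "x \<in> PiE {..<m} A'" using x2 by (simp add: PiE_iff)
    next
      fix x assume "x \<in> PiE {..<m} A'"
      hence x1: "\<forall>i\<in>{..<m}. x i \<in> A' i" and x2: "x \<in> extensional {..<m}"
        by (auto simp: PiE_iff)
      have "\<forall>i\<in>{..<m}. flip k x i \<in> A i"
      proof
        fix i assume i: "i \<in> {..<m}"
        show "flip k x i \<in> A i" using x1[rule_format, OF i] by (cases "i = k") (simp_all add: flip_def A'_def)
      qed
      moreover have "flip k x \<in> extensional {..<m}" using x2 k by (simp add: flip_def extensional_def)
      ultimately show "x \<in> flip k -` PiE {..<m} A \<inter> space (PiM {..<m} (\<lambda>_. lborel))"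
        using x2 by (simp add: PiE_iff space_PiM)
    qed
    have "emeasure (distr (PiM {..<m} (\<lambda>_. lborel)) (PiM {..<m} (\<lambda>_. lborel)) (flip k)) (PiE {..<m} A)
        = emeasure (PiM {..<m} (\<lambda>_. lborel)) (flip k -` PiE {..<m} A \<inter> space (PiM {..<m} (\<lambda>_. lborel)))"
      using flip_meas[OF k] A by (intro emeasure_distr) (auto simp: lebm_def intro!: sets_PiM_I_finite)
    also have "\<dots> = (\<Prod>i<m. emeasure lborel (A' i))"
      unfolding pre using A'm by (intro lb.emeasure_PiM) auto
    also have "\<dots> = (\<Prod>i<m. emeasure lborel (A i))"
      using A[of k, OF lessThan_iff[THEN iffD2, OF k]] by (intro prod.cong refl) (auto simp: A'_def lborel_uminus)
    finally show "emeasure (distr (PiM {..<m} (\<lambda>_. lborel)) (PiM {..<m} (\<lambda>_. lborel)) (flip k)) (PiE {..<m} A)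
        = (\<Prod>i<m. emeasure lborel (A i))" .
  qed auto
qed


lemma sq_norm_flip: "k < m \<Longrightarrow> sq_norm m (flip k x) = sq_norm m x"
  unfolding sq_norm_def flip_def by (intro sum.cong refl) auto

lemma normalize_flip: "k < m \<Longrightarrow> normalize_pt m (flip k x) = flip k (normalize_pt m x)"
  unfolding normalize_pt_def by (rule ext) (simp add: sq_norm_flip, simp add: flip_def)

lemma mono_flip: "monl qs (flip k y) = (-1) ^ count_list qs k * monl qs y"
  by (induction qs) (auto simp: monl_def flip_def)

lemma J_flip:
  assumes "k < m" "set qs \<subseteq> {..<m}" "odd (count_list qs k)"
  shows "J m qs = 0"
proof -
  have "J m qs = (-1) ^ count_list qs k * J m qs"
  proof (rule J_inv[OF flip_meas[OF assms(1)] flip_distr[OF assms(1)] _ _ assms(2)])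
    fix x assume x: "x \<in> space (lebm m)"
    have sp: "flip k x \<in> space (lebm m)"
      using x assms(1) by (auto simp: space_lebm PiE_iff flip_def extensional_def)
    show "(flip k x \<in> unit_ball m) = (x \<in> unit_ball m)"
      using x sp by (simp add: unit_ball_def sq_norm_flip[OF assms(1)])
    show "monl qs (normalize_pt m (flip k x)) = (-1) ^ count_list qs k * monl qs (normalize_pt m x)"
      by (simp add: normalize_flip[OF assms(1)] mono_flip)
  qed
  thus ?thesis using assms(3) by simp
qed


definition sw :: "nat \<Rightarrow> nat \<Rightarrow> nat \<Rightarrow> nat" where
  "sw k l i = (if i = k then l else if i = l then k else i)"

definition swp :: "nat \<Rightarrow> nat \<Rightarrow> (nat \<Rightarrow> real) \<Rightarrow> nat \<Rightarrow> real" where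
  "swp k l x = (\<lambda>i. x (sw k l i))"

lemma sw_sw[simp]: "sw k l (sw k l i) = i" by (simp add: sw_def)

lemma sw_lt: "k < m \<Longrightarrow> l < m \<Longrightarrow> i < m \<Longrightarrow> sw k l i < m" by (simp add: sw_def)

lemma sw_bij: "k < m \<Longrightarrow> l < m \<Longrightarrow> bij_betw (sw k l) {..<m} {..<m}"
  by (rule bij_betw_byWitness[where f' = "sw k l"]) (auto simp: sw_lt)

lemma sw_ge: "k < m \<Longrightarrow> l < m \<Longrightarrow> \<not> i < m \<Longrightarrow> sw k l i = i" by (auto simp: sw_def)

lemma swp_meas: "k < m \<Longrightarrow> l < m \<Longrightarrow> swp k l \<in> measurable (lebm m) (lebm m)"
proof -
  assume k: "k < m" and l: "l < m"
  have "(\<lambda>x i. x (sw k l i)) \<in> measurable (PiM {..<m} (\<lambda>_. lborel)) (PiM {..<m} (\<lambda>_. lborel :: real measure))"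
  proof (rule measurable_PiM_single')
    fix i assume i: "i \<in> {..<m}"
    have "sw k l i \<in> {..<m}" using i k l by (simp add: sw_lt)
    thus "(\<lambda>x. x (sw k l i)) \<in> measurable (PiM {..<m} (\<lambda>_. lborel)) lborel"
      by (rule measurable_component_singleton)
  qed (use k l in \<open>auto simp: space_PiM PiE_iff extensional_def sw_ge\<close>)
  thus ?thesis unfolding lebm_def swp_def by simp
qed

lemma swp_distr: "k < m \<Longrightarrow> l < m \<Longrightarrow> distr (lebm m) (lebm m) (swp k l) = lebm m"
proof -
  assume k: "k < m" and l: "l < m"
  show ?thesis unfolding lebm_def
  proof (rule lb.PiM_eqI)
    fix A :: "nat \<Rightarrow> real set" assume A: "\<And>i. i \<in> {..<m} \<Longrightarrow> A i \<in> sets lborel"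
    define A' where "A' = (\<lambda>i. A (sw k l i))"
    have A'm: "A' i \<in> sets lborel" if "i \<in> {..<m}" for i
      using A[of "sw k l i"] that k l by (simp add: A'_def sw_lt)
    have pre: "swp k l -` PiE {..<m} A \<inter> space (PiM {..<m} (\<lambda>_. lborel)) = PiE {..<m} A'"
    proof (intro set_eqI iffI)
      fix x assume "x \<in> swp k l -` PiE {..<m} A \<inter> space (PiM {..<m} (\<lambda>_. lborel))"
      hence x1: "\<forall>i\<in>{..<m}. x (sw k l i) \<in> A i" and x2: "x \<in> extensional {..<m}"
        by (auto simp: space_PiM PiE_iff swp_def)
      have "\<forall>i\<in>{..<m}. x i \<in> A' i"
      proof
        fix i assume i: "i \<in> {..<m}"
        have "sw k l i \<in> {..<m}" using i k l by (simp add: sw_lt)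
        from x1[rule_format, OF this] show "x i \<in> A' i" by (simp add: A'_def)
      qed
      thus "x \<in> PiE {..<m} A'" using x2 by (simp add: PiE_iff)
    next
      fix x assume "x \<in> PiE {..<m} A'"
      hence x1: "\<forall>i\<in>{..<m}. x i \<in> A' i" and x2: "x \<in> extensional {..<m}"
        by (auto simp: PiE_iff)
      have "\<forall>i\<in>{..<m}. swp k l x i \<in> A i"
      proof
        fix i assume i: "i \<in> {..<m}"
        have "sw k l i \<in> {..<m}" using i k l by (simp add: sw_lt)
        from x1[rule_format, OF this] show "swp k l x i \<in> A i" by (simp add: A'_def swp_def)
      qed
      moreover have "swp k l x \<in> extensional {..<m}" using x2 k l by (auto simp: swp_def extensional_def sw_ge)
      ultimately show "x \<in> swp k l -` PiE {..<m} A \<inter> space (PiM {..<m} (\<lambda>_. lborel))"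
        using x2 by (simp add: PiE_iff space_PiM)
    qed
    have "emeasure (distr (PiM {..<m} (\<lambda>_. lborel)) (PiM {..<m} (\<lambda>_. lborel)) (swp k l)) (PiE {..<m} A)
        = emeasure (PiM {..<m} (\<lambda>_. lborel)) (swp k l -` PiE {..<m} A \<inter> space (PiM {..<m} (\<lambda>_. lborel)))"
      using swp_meas[OF k l] A by (intro emeasure_distr) (auto simp: lebm_def intro!: sets_PiM_I_finite)
    also have "\<dots> = (\<Prod>i<m. emeasure lborel (A' i))"
      unfolding pre using A'm by (intro lb.emeasure_PiM) auto
    also have "\<dots> = (\<Prod>i<m. emeasure lborel (A i))"
      unfolding A'_def by (rule prod.reindex_bij_betw[OF sw_bij[OF k l]])
    finally show "emeasure (distr (PiM {..<m} (\<lambda>_. lborel)) (PiM {..<m} (\<lambda>_. lborel)) (swp k l)) (PiE {..<m} A)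
        = (\<Prod>i<m. emeasure lborel (A i))" .
  qed auto
qed

lemma sq_norm_swp: "k < m \<Longrightarrow> l < m \<Longrightarrow> sq_norm m (swp k l x) = sq_norm m x"
  unfolding sq_norm_def swp_def by (rule sum.reindex_bij_betw[OF sw_bij])

lemma normalize_swp: "k < m \<Longrightarrow> l < m \<Longrightarrow> normalize_pt m (swp k l x) = swp k l (normalize_pt m x)"
  unfolding normalize_pt_def
  by (rule ext) (simp add: sq_norm_swp, auto simp: swp_def sw_lt sw_ge)

lemma mono_swp: "monl qs (swp k l y) = monl (map (sw k l) qs) y"
  by (induction qs) (auto simp: monl_def swp_def)

lemma J_swap:
  assumes "k < m" "l < m" "set qs \<subseteq> {..<m}"
  shows "J m qs = J m (map (sw k l) qs)"
proof -
  have "J m qs = 1 * J m (map (sw k l) qs)"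
  proof (rule J_inv[OF swp_meas[OF assms(1,2)] swp_distr[OF assms(1,2)] _ _ assms(3)])
    fix x assume x: "x \<in> space (lebm m)"
    have sp: "swp k l x \<in> space (lebm m)"
      using x assms(1,2) by (auto simp: space_lebm PiE_iff swp_def extensional_def sw_ge)
    show "(swp k l x \<in> unit_ball m) = (x \<in> unit_ball m)"
      using x sp by (simp add: unit_ball_def sq_norm_swp[OF assms(1,2)])
    show "monl qs (normalize_pt m (swp k l x)) = 1 * monl (map (sw k l) qs) (normalize_pt m x)"
      by (simp add: normalize_swp[OF assms(1,2)] mono_swp)
  qed
  thus ?thesis by simp
qed


lemma ball_sub: "unit_ball m \<subseteq> space (lebm m)" by (auto simp: unit_ball_def)

lemma J_nil: "J m [] = measure (lebm m) (unit_ball m)"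
proof -
  have "J m [] = integral\<^sup>L (lebm m) (indicator (unit_ball m))"
    by (simp add: J_def set_lebesgue_integral_def monl_def)
  also have "\<dots> = measure (lebm m) (unit_ball m)"
    using ball_sub[of m] by (simp add: Int_absorb2)
  finally show ?thesis .
qed

lemma J_integrable: "set qs \<subseteq> {..<m} \<Longrightarrow>
   integrable (lebm m) (\<lambda>x. indicator (unit_ball m) x *\<^sub>R monl qs (normalize_pt m x))"
  using ball_finite[of m] by (intro integrableI_bounded_set_indicator[where B = 1])
     (auto simp: mono_meas mono_bound)

lemma null_zero: "m > 0 \<Longrightarrow> PiE {..<m} (\<lambda>_. {0::real}) \<in> null_sets (lebm m)"
proof -
  assume m: "m > 0"
  have s: "PiE {..<m} (\<lambda>_. {0::real}) \<in> sets (lebm m)"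
    unfolding lebm_def by (intro sets_PiM_I_finite) auto
  have "emeasure (lebm m) (PiE {..<m} (\<lambda>_. {0::real})) = (\<Prod>i<m. emeasure lborel {0::real})"
    unfolding lebm_def by (rule lb.emeasure_PiM) auto
  also have "\<dots> = 0" using m by simp
  finally show ?thesis using s by (simp add: null_sets_def)
qed

lemma sum_normalize_sq: "sq_norm m x > 0 \<Longrightarrow> (\<Sum>p<m. (normalize_pt m x p)\<^sup>2) = 1"
proof -
  assume pos: "sq_norm m x > 0"
  have "(\<Sum>p<m. (normalize_pt m x p)\<^sup>2) = (\<Sum>p<m. (x p)\<^sup>2 / sq_norm m x)"
    using pos by (intro sum.cong refl) (simp add: normalize_pt_def power_divide)
  also have "\<dots> = (\<Sum>p<m. (x p)\<^sup>2) / sq_norm m x" by (rule sum_divide_distrib[symmetric])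
  also have "\<dots> = sq_norm m x / sq_norm m x" by (simp only: sq_norm_def)
  finally show ?thesis using pos by simp
qed

lemma J_sum_sq:
  assumes m: "m > 0"
  shows "(\<Sum>p<m. J m [p,p]) = J m []"
proof -
  define f where "f = (\<lambda>p x. indicator (unit_ball m) x *\<^sub>R monl [p,p] (normalize_pt m x))"
  have "(\<Sum>p<m. J m [p,p]) = (\<Sum>p<m. integral\<^sup>L (lebm m) (f p))"
    by (simp add: J_def set_lebesgue_integral_def f_def)
  also have "\<dots> = integral\<^sup>L (lebm m) (\<lambda>x. \<Sum>p<m. f p x)"
    by (rule Bochner_Integration.integral_sum[symmetric]) (unfold f_def, rule J_integrable, simp)
  also have "\<dots> = integral\<^sup>L (lebm m) (\<lambda>x. indicator (unit_ball m) x *\<^sub>R monl [] (normalize_pt m x))"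
  proof (rule integral_cong_AE)
    show "(\<lambda>x. \<Sum>p<m. f p x) \<in> borel_measurable (lebm m)"
      unfolding f_def using mono_meas ball_sets
      by (intro borel_measurable_sum borel_measurable_scaleR borel_measurable_indicator) auto
    show "(\<lambda>x. indicator (unit_ball m) x *\<^sub>R monl [] (normalize_pt m x)) \<in> borel_measurable (lebm m)"
      using mono_meas[of "[]" m] ball_sets
      by (intro borel_measurable_scaleR borel_measurable_indicator) auto
    show "AE x in lebm m. (\<Sum>p<m. f p x) = indicator (unit_ball m) x *\<^sub>R monl [] (normalize_pt m x)"
    proof (rule AE_I'[OF null_zero[OF m]])
      show "{x \<in> space (lebm m). \<not> ((\<Sum>p<m. f p x) = indicator (unit_ball m) x *\<^sub>R monl [] (normalize_pt m x))}
          \<subseteq> PiE {..<m} (\<lambda>_. {0})"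
      proof
        fix x assume x: "x \<in> {x \<in> space (lebm m). \<not> ((\<Sum>p<m. f p x) = indicator (unit_ball m) x *\<^sub>R monl [] (normalize_pt m x))}"
        have "\<not> sq_norm m x > 0"
        proof
          assume pos: "sq_norm m x > 0"
          have "(\<Sum>p<m. f p x) = indicator (unit_ball m) x * (\<Sum>p<m. (normalize_pt m x p)\<^sup>2)"
            by (simp add: f_def monl_def sum_distrib_left power2_eq_square)
          also have "\<dots> = indicator (unit_ball m) x *\<^sub>R monl [] (normalize_pt m x)"
            using sum_normalize_sq[OF pos] by (simp add: monl_def)
          finally show False using x by simp
        qed
        hence z: "sq_norm m x = 0" using sq_norm_nonneg[of m x] by linarith
        have "x i = 0" if "i < m" for i
          using coord_le_sq_norm[OF that, of x] z by simp
        moreover have "x \<in> extensional {..<m}" using x by (auto simp: space_lebm PiE_iff)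
        ultimately show "x \<in> PiE {..<m} (\<lambda>_. {0})" by (simp only: PiE_iff) simp
      qed
    qed
  qed
  also have "\<dots> = J m []" by (simp add: J_def set_lebesgue_integral_def)
  finally show ?thesis .
qed

lemma ball_pos: "m > 0 \<Longrightarrow> measure (lebm m) (unit_ball m) > 0"
proof -
  assume m: "m > 0"
  have sub: "PiE {..<m} (\<lambda>_. {0..1/real m}) \<subseteq> unit_ball m"
  proof
    fix x assume x: "x \<in> PiE {..<m} (\<lambda>_. {0..1/real m})"
    have "(x i)\<^sup>2 \<le> 1 / real m" if "i < m" for i
    proof -
      have "0 \<le> x i" "x i \<le> 1 / real m" using x that by (auto simp: PiE_iff)
      moreover have "1 / real m \<le> 1" using m by simp
      ultimately have "x i * x i \<le> x i * 1" by (intro mult_left_mono) auto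
      thus ?thesis using \<open>x i \<le> 1 / real m\<close> by (simp add: power2_eq_square)
    qed
    hence "sq_norm m x \<le> (\<Sum>i<m. 1 / real m)" unfolding sq_norm_def by (intro sum_mono) auto
    also have "\<dots> = 1" using m by simp
    finally show "x \<in> unit_ball m" using x by (auto simp: unit_ball_def space_lebm PiE_iff)
  qed
  have "emeasure (lebm m) (PiE {..<m} (\<lambda>_. {0..1/real m})) = (\<Prod>i<m. emeasure lborel {0..1/real m})"
    unfolding lebm_def by (rule lb.emeasure_PiM) auto
  also have "\<dots> = ennreal (1 / real m) ^ m" by simp
  finally have e: "emeasure (lebm m) (PiE {..<m} (\<lambda>_. {0..1/real m})) = ennreal (1 / real m) ^ m" .
  have "ennreal (1 / real m) ^ m = ennreal ((1 / real m) ^ m)" by (rule ennreal_power) simp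
  moreover have "0 < (1 / real m) ^ m" using m by simp
  ultimately have "0 < ennreal (1 / real m) ^ m" by (simp only: ennreal_less_zero_iff)
  also have "\<dots> \<le> emeasure (lebm m) (unit_ball m)"
    unfolding e[symmetric] by (rule emeasure_mono[OF sub ball_sets])
  finally have "0 < emeasure (lebm m) (unit_ball m)" .
  thus ?thesis using ball_finite[of m] by (simp add: measure_def enn2real_positive_iff)
qed


definition sval :: "nat \<Rightarrow> nat list \<Rightarrow> real" where
  "sval m qs = (if qs = [] then 1 else if length qs = 2 \<and> qs ! 0 = qs ! 1 then 1 / real m else 0)"

lemma odd_count3: "\<exists>k \<in> set [p,q,r::nat]. odd (count_list [p,q,r] k)"
proof (cases "p = q")
  case True
  show ?thesis
  proof (cases "q = r")
    case True with \<open>p = q\<close> show ?thesis by auto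
  next
    case False with \<open>p = q\<close> show ?thesis by (intro bexI[of _ r]) auto
  qed
next
  case False
  show ?thesis
  proof (cases "p = r")
    case True with False show ?thesis by (intro bexI[of _ q]) auto
  next
    case False2: False
    show ?thesis
    proof (cases "q = r")
      case True with False show ?thesis by (intro bexI[of _ p]) auto
    next
      case False3: False
      with False False2 show ?thesis by (intro bexI[of _ p]) auto
    qed
  qed
qed

lemma list_cases3: "length qs \<le> 3 \<Longrightarrow> qs = [] \<or> (\<exists>p. qs = [p]) \<or> (\<exists>p q. qs = [p,q]) \<or> (\<exists>p q r. qs = [p,q,r])"
  apply (cases qs, simp)
  apply (rename_tac a t, case_tac t, simp)
  apply (rename_tac b u, case_tac u, simp)
  apply (rename_tac c v, case_tac v, simp)
  apply simp
  done

lemma J_pp: "p < m \<Longrightarrow> J m [p,p] = J m [0,0]"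
proof -
  assume p: "p < m"
  have "J m [p,p] = J m (map (sw 0 p) [p,p])" using p by (intro J_swap) auto
  also have "map (sw 0 p) [p,p] = [0,0]" by (simp add: sw_def)
  finally show ?thesis .
qed

lemma J_val:
  assumes m: "m > 0" and q: "set qs \<subseteq> {..<m}" and len: "length qs \<le> 3"
  shows "J m qs / measure (lebm m) (unit_ball m) = sval m qs"
proof -
  define \<mu> where "\<mu> = measure (lebm m) (unit_ball m)"
  have \<mu>: "\<mu> > 0" using ball_pos[OF m] by (simp add: \<mu>_def)
  have odd0: "J m qs = 0" if "k \<in> set qs" "odd (count_list qs k)" for k
    using J_flip[of k m qs] that q by auto
  consider "qs = []" | p where "qs = [p]" | p q where "qs = [p,q]" | p q r where "qs = [p,q,r]"
    using list_cases3[OF len] by blast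
  thus ?thesis
  proof cases
    case 1 thus ?thesis using \<mu> by (simp add: J_nil sval_def \<mu>_def[symmetric])
  next
    case (2 p) thus ?thesis using odd0[of p] by (simp add: sval_def)
  next
    case (3 p p')
    show ?thesis
    proof (cases "p = p'")
      case False thus ?thesis using odd0[of p] 3 by (simp add: sval_def)
    next
      case True
      have pm: "p < m" using q 3 by auto
      have "(\<Sum>i<m. J m [i,i]) = (\<Sum>i<m. J m [0,0])" by (intro sum.cong refl) (rule J_pp, simp)
      hence "real m * J m [0,0] = \<mu>" using J_sum_sq[OF m] J_nil[of m] by (simp add: \<mu>_def)
      hence "J m [p,p] = \<mu> / real m" using J_pp[OF pm] m by (simp add: field_simps)
      thus ?thesis using 3 True \<mu> by (simp add: sval_def \<mu>_def[symmetric])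
    qed
  next
    case (4 p p' p'')
    from odd_count3[of p p' p''] obtain k where "k \<in> set [p,p',p'']" "odd (count_list [p,p',p''] k)" by blast
    hence "k \<in> set qs" "odd (count_list qs k)" using 4 by simp_all
    thus ?thesis using odd0 4 by (simp add: sval_def)
  qed
qed


lemma mono_append: "monl (xs @ ys) y = monl xs y * monl ys y"
  by (simp add: monl_def)

lemma mono_replicate: "monl (replicate k n) y = y n ^ k"
  by (simp add: monl_def)

lemma mono_exp: "\<exists>qs. set qs \<subseteq> {..<n} \<and> length qs = (\<Sum>i<n. a i) \<and> (\<forall>y. (\<Prod>i<n. y i ^ a i) = monl qs y)"
proof (induction n)
  case 0 show ?case by (intro exI[of _ "[]"]) (simp add: monl_def)
next
  case (Suc n)
  then obtain qs where qs: "set qs \<subseteq> {..<n}" "length qs = (\<Sum>i<n. a i)" "\<forall>y. (\<Prod>i<n. y i ^ a i) = monl qs y"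
    by blast
  show ?case
    by (intro exI[of _ "qs @ replicate (a n) n"]) (use qs in \<open>auto simp: mono_append mono_replicate\<close>)
qed

lemma design_crit:
  fixes X :: "nat \<Rightarrow> nat \<Rightarrow> real"
  assumes m: "m > 0" and N: "N > 0" and nrm: "\<forall>j<N. sq_norm m (col m X j) = 1"
    and mom: "\<And>qs. set qs \<subseteq> {..<m} \<Longrightarrow> length qs \<le> 3 \<Longrightarrow> (\<Sum>j<N. monl qs (col m X j)) / real N = sval m qs"
  shows "spherical_design m 3 N X"
proof -
  define \<mu> where "\<mu> = measure (lebm m) (unit_ball m)"
  have \<mu>: "\<mu> > 0" using ball_pos[OF m] by (simp add: \<mu>_def)
  have "sphere_avg m p = (\<Sum>j<N. p (col m X j)) / real N" if P: "poly_deg_le m 3 p" for p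
  proof -
    obtain c where c: "\<forall>x. p x = (\<Sum>a\<in>exps m 3. c a * (\<Prod>i<m. x i ^ a i))"
      using P unfolding poly_deg_le_def by blast
    define E where "E = exps m 3"
    obtain Q where Q: "\<And>a. set (Q a) \<subseteq> {..<m} \<and> length (Q a) = (\<Sum>i<m. a i) \<and> (\<forall>y. (\<Prod>i<m. y i ^ a i) = monl (Q a) y)"
      using mono_exp[of m] by metis
    have p': "p x = (\<Sum>a\<in>E. c a * monl (Q a) x)" for x
      using c Q by (simp add: E_def)
    have len: "length (Q a) \<le> 3" if "a \<in> E" for a
      using Q[of a] that by (simp add: E_def exps_def)
    have "(LINT x : unit_ball m | lebm m. p (normalize_pt m x))
        = integral\<^sup>L (lebm m) (\<lambda>x. \<Sum>a\<in>E. c a * (indicator (unit_ball m) x *\<^sub>R monl (Q a) (normalize_pt m x)))"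
      unfolding set_lebesgue_integral_def p'
      by (intro Bochner_Integration.integral_cong refl) (simp add: sum_distrib_left mult_ac)
    also have "\<dots> = (\<Sum>a\<in>E. integral\<^sup>L (lebm m) (\<lambda>x. c a * (indicator (unit_ball m) x *\<^sub>R monl (Q a) (normalize_pt m x))))"
      by (rule Bochner_Integration.integral_sum) (intro integrable_mult_right J_integrable, use Q in blast)
    also have "\<dots> = (\<Sum>a\<in>E. c a * J m (Q a))"
      by (simp add: J_def set_lebesgue_integral_def)
    finally have L: "sphere_avg m p = (\<Sum>a\<in>E. c a * (J m (Q a) / \<mu>))"
      unfolding sphere_avg_def \<mu>_def[symmetric] by (simp add: sum_divide_distrib)
    have "(\<Sum>j<N. p (col m X j)) / real N = (\<Sum>a\<in>E. c a * ((\<Sum>j<N. monl (Q a) (col m X j)) / real N))"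
      unfolding p' by (simp add: sum_divide_distrib sum_distrib_left sum.swap[of _ E] mult_ac)
    also have "\<dots> = (\<Sum>a\<in>E. c a * (J m (Q a) / \<mu>))"
    proof (intro sum.cong refl)
      fix a assume a: "a \<in> E"
      show "c a * ((\<Sum>j<N. monl (Q a) (col m X j)) / real N) = c a * (J m (Q a) / \<mu>)"
        using mom[of "Q a"] J_val[OF m, of "Q a"] Q[of a] len[OF a] by (simp add: \<mu>_def)
    qed
    finally show ?thesis using L by simp
  qed
  thus ?thesis using nrm unfolding spherical_design_def by blast
qed


lemma sum_split_n: "(\<Sum>j<(n1::nat)+n2. f j) = (\<Sum>j<n1. f j) + (\<Sum>j<n2. (f (n1 + j) :: real))"
  by (induction n2) (simp_all add: add_ac)

lemma mono_col: "set qs \<subseteq> {..<m} \<Longrightarrow> monl qs (col m X j) = monl qs (\<lambda>i. X i j)"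
  by (induction qs) (auto simp: monl_def col_def)

lemma mono_mult: "monl qs (\<lambda>i. w i * y i) = monl qs w * monl qs y"
  by (induction qs) (simp_all add: monl_def)

lemma mono_restr: "monl qs (\<lambda>i. if i < d then y i else 0) = (if set qs \<subseteq> {..<d} then monl qs y else 0)"
  by (induction qs) (auto simp: monl_def)

lemma sum_if_lt: "d \<le> (m::nat) \<Longrightarrow> (\<Sum>i<m. if i < d then f i else 0) = (\<Sum>i<d. (f i :: real))"
proof -
  assume "d \<le> m"
  have "(\<Sum>i<m. if i < d then f i else 0) = (\<Sum>i<m. if i \<in> {..<d} then f i else 0)" by simp
  also have "\<dots> = sum f ({..<m} \<inter> {..<d})" by (rule sum.inter_restrict[symmetric]) simp
  also have "{..<m} \<inter> {..<d} = {..<d}" using \<open>d \<le> m\<close> by auto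
  finally show ?thesis .
qed


lemma ar1: fixes a s x y :: real assumes "a > 0" "x > 0" "s > 0"
  shows "(1 - (s - a) * y / (a * x)) * (x / s) + y / a = (x + y) / s"
  using assms by (simp add: field_simps)
lemma ar2: fixes s x y :: real assumes "x > 0" "s > 0"
  shows "(1 + y / x) * (x / s) = (x + y) / s"
  using assms by (simp add: field_simps)
lemma ar3: fixes a s x y :: real assumes "a > 0" "x > 0" "s > 0"
  shows "(1 + y / x) + ((1 - (s - a) * y / (a * x)) - (1 + y / x)) * (a / s) = 1"
  using assms by (simp add: field_simps)


theorem mainTheorem9:
  fixes d1 d2 n1 n2 :: nat and A C :: "nat \<Rightarrow> nat \<Rightarrow> real"
  assumes "d1 > 0" "d2 > 0" "even d1" "even d2"
    and "n1 > 0" "n2 > 0"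
    and "d1 * n1 \<ge> d2 * n2"
    and "regular_design_matrix 3 (d1 + d2 - 1) n1 A"
    and "regular_design_matrix 3 (d1 - 1) n2 C"
  shows "let d = d1 + d2 - 1; n = n1 + n2;
             \<alpha> = sqrt (1 - real (d2 * n2) / real (d1 * n1));
             \<beta> = sqrt (1 + real n2 / real n1);
             M = (\<lambda>i j. if j < n1 then (if i < d1 then \<alpha> * A i j else \<beta> * A i j)
                        else (if i < d1 then C i (j - n1) else 0))
         in spherical_design (d + 1) 3 n M"
proof -
  note d1 = assms(1) and d2 = assms(2) and n1 = assms(5) and n2 = assms(6)
  define m where "m = d1 + d2"
  have m1: "d1 + d2 - 1 + 1 = m" using d1 by (simp add: m_def)
  have c1: "d1 - 1 + 1 = d1" using d1 by simp
  have hA: "regular_design_matrix 3 (d1 + d2 - 1) n1 A" by fact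
  have hC: "regular_design_matrix 3 (d1 - 1) n2 C" by fact
  define \<alpha> where "\<alpha> = sqrt (1 - real (d2 * n2) / real (d1 * n1))"
  define \<beta> where "\<beta> = sqrt (1 + real n2 / real n1)"
  define w where "w = (\<lambda>i. if i < d1 then \<alpha> else \<beta>)"
  define M where "M = (\<lambda>i j. if j < n1 then (if i < d1 then \<alpha> * A i j else \<beta> * A i j)
                        else (if i < d1 then C i (j - n1) else 0))"
  have rd1: "real d1 > 0" "real n1 > 0" "real m > 0" "real m = real d1 + real d2" using d1 n1 by (auto simp: m_def)
  have le1: "real (d2 * n2) / real (d1 * n1) \<le> 1"
    using assms(7) d1 n1 by (simp add: divide_le_eq_1 del: of_nat_mult) 
  have a2: "\<alpha>\<^sup>2 = 1 - real d2 * real n2 / (real d1 * real n1)"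
    using le1 unfolding \<alpha>_def by simp
  have b2: "\<beta>\<^sup>2 = 1 + real n2 / real n1"
    unfolding \<beta>_def by (simp add: add_nonneg_nonneg)
  have d2e: "real d2 = real m - real d1" by (simp add: m_def)
  have K1: "\<alpha>\<^sup>2 * (real n1 / real m) + real n2 / real d1 = real (n1 + n2) / real m"
    unfolding a2 d2e of_nat_add using ar1[of "real d1" "real n1" "real m" "real n2"] rd1 by simp
  have K2: "\<beta>\<^sup>2 * (real n1 / real m) = real (n1 + n2) / real m"
    unfolding b2 of_nat_add using ar2[of "real n1" "real m" "real n2"] rd1 by simp
  have K3: "\<beta>\<^sup>2 + (\<alpha>\<^sup>2 - \<beta>\<^sup>2) * (real d1 / real m) = 1"
    unfolding a2 b2 d2e using ar3[of "real d1" "real n1" "real m" "real n2"] rd1 by simp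
  have "spherical_design m 3 (n1 + n2) M"
  proof (rule design_crit)
    show "m > 0" using d1 by (simp add: m_def)
    show "n1 + n2 > 0" using n1 by simp
    show "\<forall>j<n1 + n2. sq_norm m (col m M j) = 1"
    proof (intro allI impI)
      fix j assume j: "j < n1 + n2"
      obtain k1 where k1: "d1 = 2 * k1" using assms(3) by (elim evenE)
      obtain k where k: "m = 2 * k" using assms(3,4) unfolding m_def by (metis even_add evenE)
      have sq: "sq_norm m (col m M j) = (\<Sum>i<m. (M i j)\<^sup>2)"
        unfolding sq_norm_def col_def by simp
      show "sq_norm m (col m M j) = 1"
      proof (cases "j < n1")
        case True
        have An: "(\<Sum>i<2*k'. (A i j)\<^sup>2) = 2 * real k' / real m" if "2 * k' \<le> m" for k'
          using RDnorm[OF hA True, of k'] that unfolding m1 by simp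
        have "(\<Sum>i<m. (M i j)\<^sup>2) = (\<Sum>i<m. \<beta>\<^sup>2 * (A i j)\<^sup>2 + (if i < d1 then (\<alpha>\<^sup>2 - \<beta>\<^sup>2) * (A i j)\<^sup>2 else 0))"
          using True by (intro sum.cong refl) (simp add: M_def power_mult_distrib algebra_simps)
        also have "\<dots> = \<beta>\<^sup>2 * (\<Sum>i<m. (A i j)\<^sup>2) + (\<Sum>i<m. (if i < d1 then (\<alpha>\<^sup>2 - \<beta>\<^sup>2) * (A i j)\<^sup>2 else 0))"
          by (simp add: sum.distrib sum_distrib_left)
        also have "(\<Sum>i<m. (if i < d1 then (\<alpha>\<^sup>2 - \<beta>\<^sup>2) * (A i j)\<^sup>2 else 0)) = (\<Sum>i<d1. (\<alpha>\<^sup>2 - \<beta>\<^sup>2) * (A i j)\<^sup>2)"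
          by (rule sum_if_lt) (simp add: m_def)
        also have "\<dots> = (\<alpha>\<^sup>2 - \<beta>\<^sup>2) * (real d1 / real m)"
          using An[of k1] k1 by (simp add: sum_distrib_left[symmetric] m_def)
        also have "(\<Sum>i<m. (A i j)\<^sup>2) = 1"
          using An[of k] k rd1 by simp
        finally show ?thesis using sq K3 by simp
      next
        case False
        have Cn: "(\<Sum>i<2*k'. (C i (j - n1))\<^sup>2) = 2 * real k' / real d1" if "2 * k' \<le> d1" for k'
          using RDnorm[OF hC, of "j - n1" k'] that j False unfolding c1 by simp
        have "(\<Sum>i<m. (M i j)\<^sup>2) = (\<Sum>i<m. if i < d1 then (C i (j - n1))\<^sup>2 else 0)"
          using False by (intro sum.cong refl) (simp add: M_def)
        also have "\<dots> = (\<Sum>i<d1. (C i (j - n1))\<^sup>2)"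
          by (rule sum_if_lt) (simp add: m_def)
        also have "\<dots> = 1" using Cn[of k1] k1 rd1 by simp
        finally show ?thesis using sq by simp
      qed
    qed
    show "(\<Sum>j<n1 + n2. monl qs (col m M j)) / real (n1 + n2) = sval m qs"
      if q: "set qs \<subseteq> {..<m}" and len: "length qs \<le> 3" for qs
    proof -
      have MA: "M i j = w i * A i j" if "j < n1" for i j using that by (simp add: M_def w_def)
      have MC: "M i (n1 + j) = (if i < d1 then C i j else 0)" for i j by (simp add: M_def)
      have split: "(\<Sum>j<n1+n2. monl qs (col m M j)) = monl qs w * (\<Sum>j<n1. monl qs (\<lambda>i. A i j))
          + (if set qs \<subseteq> {..<d1} then (\<Sum>j<n2. monl qs (\<lambda>i. C i j)) else 0)"
      proof -
        have "(\<Sum>j<n1+n2. monl qs (col m M j)) = (\<Sum>j<n1. monl qs (col m M j)) + (\<Sum>j<n2. monl qs (col m M (n1 + j)))"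
          by (rule sum_split_n)
        also have "(\<Sum>j<n1. monl qs (col m M j)) = (\<Sum>j<n1. monl qs w * monl qs (\<lambda>i. A i j))"
          by (intro sum.cong refl) (simp add: mono_col[OF q] MA mono_mult)
        also have "(\<Sum>j<n2. monl qs (col m M (n1 + j))) = (\<Sum>j<n2. (if set qs \<subseteq> {..<d1} then monl qs (\<lambda>i. C i j) else 0))"
          by (intro sum.cong refl) (simp add: mono_col[OF q] MC mono_restr)
        finally show ?thesis by (simp add: sum_distrib_left)
      qed
      have A1: "p < m \<Longrightarrow> (\<Sum>j<n1. A p j) = 0" for p using RD1[OF hA, of p] unfolding m1 by simp
      have A2: "p < m \<Longrightarrow> q < m \<Longrightarrow> (\<Sum>j<n1. A p j * A q j) = (if p = q then real n1 / real m else 0)" for p q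
        using RD2[OF hA, of p q] unfolding m1 by simp
      have A3: "p < m \<Longrightarrow> q < m \<Longrightarrow> r < m \<Longrightarrow> (\<Sum>j<n1. A p j * A q j * A r j) = 0" for p q r
        using RD3[OF hA, of p q r] unfolding m1 by simp
      have C1: "p < d1 \<Longrightarrow> (\<Sum>j<n2. C p j) = 0" for p using RD1[OF hC, of p] unfolding c1 by simp
      have C2: "p < d1 \<Longrightarrow> q < d1 \<Longrightarrow> (\<Sum>j<n2. C p j * C q j) = (if p = q then real n2 / real d1 else 0)" for p q
        using RD2[OF hC, of p q] unfolding c1 by simp
      have C3: "p < d1 \<Longrightarrow> q < d1 \<Longrightarrow> r < d1 \<Longrightarrow> (\<Sum>j<n2. C p j * C q j * C r j) = 0" for p q r
        using RD3[OF hC, of p q r] unfolding c1 by simp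
      have nn: "real (n1 + n2) > 0" using n1 by simp
      from list_cases3[OF len] show ?thesis
      proof (elim disjE exE)
        assume "qs = []"
        thus ?thesis using nn unfolding split by (simp add: monl_def sval_def)
      next
        fix p assume qs: "qs = [p]"
        hence p: "p < m" using q by simp
        show ?thesis using A1[OF p] C1 unfolding split by (simp add: qs monl_def sval_def)
      next
        fix p p' assume qs: "qs = [p, p']"
        hence p: "p < m" "p' < m" using q by auto
        show ?thesis
        proof (cases "p = p'")
          case False
          thus ?thesis using A2[OF p] C2[of p p'] unfolding split by (simp add: qs monl_def sval_def)
        next
          case True
          show ?thesis
          proof (cases "p < d1")
            case pd: True
            have "(\<Sum>j<n1+n2. monl qs (col m M j)) = \<alpha>\<^sup>2 * (real n1 / real m) + real n2 / real d1"
              using A2[OF p] C2[OF pd pd] True pd unfolding split by (simp add: qs monl_def w_def power2_eq_square)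
            thus ?thesis using K1 nn rd1 True by (simp add: qs sval_def)
          next
            case pd: False
            have "(\<Sum>j<n1+n2. monl qs (col m M j)) = \<beta>\<^sup>2 * (real n1 / real m)"
              using A2[OF p] True pd unfolding split by (simp add: qs monl_def w_def power2_eq_square)
            thus ?thesis using K2 nn rd1 True by (simp add: qs sval_def)
          qed
        qed
      next
        fix p p' p'' assume qs: "qs = [p, p', p'']"
        hence p: "p < m" "p' < m" "p'' < m" using q by auto
        show ?thesis using A3[OF p] C3[of p p' p''] unfolding split by (simp add: qs monl_def sval_def mult.assoc)
      qed
    qed
  qed
  thus ?thesis unfolding Let_def \<alpha>_def[symmetric] \<beta>_def[symmetric] M_def[symmetric] m1 .
qed


end
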